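(* Let $\varepsilon>0$, $s\le d$, let $U\in\mathbb R^{d\times s}$ satisfy $U^\top U=I_s$, and let $v\in\mathbb R^d$. Let $X$ and $Y$ be random vectors in $\mathbb R^s$ and $\mathbb R^d$ respectively with finite second moments. Then \[ \mathrm{OT}_{c,\varepsilon}(UX+v,Y)=\mathrm{OT}_{c,\varepsilon}(X,U^\top(Y-v))+\mathbb E\big[\|(I_d-UU^\top)(Y-v)\|_2^2\big], \] where on each side $c$ is the squared Euclidean distance $c(x,y)=\|x-y\|_2^2$ on the respective space ($\mathbb R^d$ on the left, $\mathbb R^s$ on the right).
   Context: For random vectors $X',Y'$ with laws $\mu,\nu$, $\mathrm{OT}_{c,\varepsilon}(X',Y')=\mathrm{OT}_{c,\varepsilon}(\mu,\nu)=\inf_{\pi\in\Pi(\mu,\nu)}\int c\,d\pi+\varepsilon\,\mathrm{KL}(\pi\mid\mu\otimes\nu)$, where $\Pi(\mu,\nu)$ is the set of couplings and $\mathrm{KL}(\pi\mid\rho)=\int\log(d\pi/d\rho)\,d\pi$ if $\pi\ll\rho$ and $+\infty$ otherwise. *)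

theory Defs
  imports "HOL-Probability.Probability"
begin

definition couplings :: "'a measure \<Rightarrow> 'b measure \<Rightarrow> ('a \<times> 'b) measure set" where
  "couplings \<mu> \<nu> = {\<pi>. sets \<pi> = sets (\<mu> \<Otimes>\<^sub>M \<nu>) \<and> prob_space \<pi> \<and>
      distr \<pi> \<mu> fst = \<mu> \<and> distr \<pi> \<nu> snd = \<nu>}"

text \<open>The negative part of log(d pi/d rho) is always pi-integrable
  for finite rho, so non-integrability means the integral is +infinity.\<close>
definition KL_div :: "'a measure \<Rightarrow> 'a measure \<Rightarrow> ereal" where
  "KL_div \<pi> \<rho> =
     (if absolutely_continuous \<rho> \<pi> \<and> integrable \<pi> (\<lambda>z. ln (enn2real (RN_deriv \<rho> \<pi> z)))
      then ereal (\<integral>z. ln (enn2real (RN_deriv \<rho> \<pi> z)) \<partial>\<pi>)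
      else \<infinity>)"

text \<open>Transport cost int c d pi (taken as +infinity when c is not pi-integrable;
  this is exact for nonnegative costs such as the squared distance).\<close>
definition cost_integral :: "('a \<times> 'b) measure \<Rightarrow> ('a \<Rightarrow> 'b \<Rightarrow> real) \<Rightarrow> ereal" where
  "cost_integral \<pi> c =
     (if integrable \<pi> (\<lambda>z. c (fst z) (snd z)) then ereal (\<integral>z. c (fst z) (snd z) \<partial>\<pi>) else \<infinity>)"

definition OT_ent :: "('a \<Rightarrow> 'b \<Rightarrow> real) \<Rightarrow> real \<Rightarrow> 'a measure \<Rightarrow> 'b measure \<Rightarrow> ereal" where
  "OT_ent c \<epsilon> \<mu> \<nu> =
     (INF \<pi> \<in> couplings \<mu> \<nu>. cost_integral \<pi> c + ereal \<epsilon> * KL_div \<pi> (\<mu> \<Otimes>\<^sub>M \<nu>))"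

definition sqdist :: "'a::real_normed_vector \<Rightarrow> 'a \<Rightarrow> real" where
  "sqdist x y = (norm (x - y))\<^sup>2"

end

theory Submission
  imports Defs
begin



lemma KL_distr_le:
  fixes P R :: "'a measure" and Phi :: "'a \<Rightarrow> 'b"
  assumes R: "prob_space R" and P: "prob_space P" and sets: "sets P = sets R"
    and Phi[measurable]: "Phi \<in> measurable R N"
  shows "KL_div (distr P N Phi) (distr R N Phi) \<le> KL_div P R"
proof (cases "absolutely_continuous R P \<and> integrable P (\<lambda>z. ln (enn2real (RN_deriv R P z)))")
  case False
  hence "KL_div P R = \<infinity>" by (simp add: KL_div_def)
  thus ?thesis by simp
next
  case True
  hence ac: "absolutely_continuous R P" and intl: "integrable P (\<lambda>z. ln (enn2real (RN_deriv R P z)))" by auto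
  interpret R: prob_space R by fact
  interpret P: prob_space P by fact
  define R' where "R' = distr R N Phi"
  define P' where "P' = distr P N Phi"
  have PhiP[measurable]: "Phi \<in> measurable P N" unfolding measurable_cong_sets[OF sets refl] by (rule Phi)
  interpret R': prob_space R' unfolding R'_def by (rule R.prob_space_distr) fact
  interpret P': prob_space P' unfolding P'_def by (rule P.prob_space_distr) fact
  have setsR'[simp]: "sets R' = sets N" "sets P' = sets N" by (simp_all add: R'_def P'_def)
  have spR'[simp]: "space R' = space N" "space P' = space N" by (simp_all add: R'_def P'_def)
  have spP[simp]: "space P = space R" using sets sets_eq_imp_space_eq by blast
  have ac': "absolutely_continuous R' P'"
    unfolding absolutely_continuous_def
  proof
    fix A assume "A \<in> null_sets R'"
    hence "Phi -` A \<inter> space R \<in> null_sets R" "A \<in> sets N" using null_sets_distr_iff[OF Phi] by (auto simp: R'_def)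
    hence "Phi -` A \<inter> space P \<in> null_sets P" using ac by (auto simp: absolutely_continuous_def)
    thus "A \<in> null_sets P'" using null_sets_distr_iff[OF PhiP] \<open>A \<in> sets N\<close> by (simp add: P'_def)
  qed
  define g where "g = RN_deriv R P"
  define g' where "g' = RN_deriv R' P'"
  define G where "G = (\<lambda>x. enn2real (g x))"
  define G' where "G' = (\<lambda>x. enn2real (g' x))"
  have gm[measurable]: "g \<in> borel_measurable R" unfolding g_def by simp
  have gmP[measurable]: "g \<in> borel_measurable P" unfolding measurable_cong_sets[OF sets refl] by (rule gm)
  have gm'[measurable]: "g' \<in> borel_measurable N" unfolding g'_def 
    using borel_measurable_RN_deriv[of R' P'] unfolding measurable_cong_sets[OF setsR'(1) refl] .
  have gmR'[measurable]: "g' \<in> borel_measurable R'" unfolding g'_def by simp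
  have Gm[measurable]: "G \<in> borel_measurable P" "G \<in> borel_measurable R" unfolding G_def by simp_all
  have Gm'[measurable]: "G' \<in> borel_measurable N" unfolding G'_def by simp
  have GmP'[measurable]: "G' \<in> borel_measurable P'" unfolding measurable_cong_sets[OF setsR'(2) refl] by (rule Gm')
  have GmR'[measurable]: "G' \<in> borel_measurable R'" unfolding G'_def by simp
  have Pd: "density R g = P" unfolding g_def using R.density_RN_deriv[OF ac sets] .
  have P'd: "density R' g' = P'" unfolding g'_def using R'.density_RN_deriv[OF ac'] by simp
  have gfin: "AE x in R. g x \<noteq> \<infinity>" unfolding g_def
    using R.RN_deriv_finite[OF prob_space_imp_sigma_finite[OF P] ac sets] by simp
  have gfin': "AE x in R'. g' x \<noteq> \<infinity>" unfolding g'_def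
    using R'.RN_deriv_finite[OF prob_space_imp_sigma_finite[OF P'.prob_space_axioms] ac'] by simp
  have gG: "AE x in R. g x = ennreal (G x)" using gfin by eventually_elim (auto simp: G_def less_top)
  have gG': "AE x in R'. g' x = ennreal (G' x)" using gfin' by eventually_elim (auto simp: G'_def less_top)
  have Gpos: "AE x in P. 0 < G x"
  proof -
    have "AE x in R. 0 < g x \<longrightarrow> 0 < G x" using gfin by eventually_elim (auto simp: G_def enn2real_positive_iff less_top)
    thus ?thesis by (subst Pd[symmetric]) (simp add: AE_density)
  qed
  have Gpos': "AE x in P'. 0 < G' x"
  proof -
    have "AE x in R'. 0 < g' x \<longrightarrow> 0 < G' x" using gfin' by eventually_elim (auto simp: G'_def enn2real_positive_iff less_top)
    thus ?thesis by (subst P'd[symmetric]) (simp add: AE_density[OF gmR'])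
  qed
  have intG': "(\<integral>\<^sup>+x. ennreal (G' x) \<partial>R') = 1"
  proof -
    have "(\<integral>\<^sup>+x. ennreal (G' x) \<partial>R') = (\<integral>\<^sup>+x. g' x \<partial>R')"
      using gG' by (intro nn_integral_cong_AE) auto
    also have "\<dots> = emeasure (density R' g') (space R')"
      by (subst emeasure_density) (auto intro!: nn_integral_cong simp: indicator_def)
    also have "\<dots> = 1" using P'd P'.emeasure_space_1 by simp
    finally show ?thesis .
  qed
  have G'nn: "\<And>w. G' w \<ge> 0" by (simp add: G'_def)
  have Gnn: "\<And>w. G w \<ge> 0" by (simp add: G_def)
  have intl': "integrable P (\<lambda>x. ln (G x))" using intl by (simp add: G_def g_def)
  have step: "integrable P' (\<lambda>w. ln (max (G' w) \<delta>)) \<and> (\<integral>w. ln (max (G' w) \<delta>) \<partial>P') \<le> (\<integral>x. ln (G x) \<partial>P) + \<delta>"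
    if \<delta>: "\<delta> > 0" for \<delta>
  proof -
    define b where "b = (\<lambda>x. max (G' (Phi x)) \<delta>)"
    have bm[measurable]: "b \<in> borel_measurable P" unfolding b_def by measurable
    have bmR[measurable]: "b \<in> borel_measurable R" unfolding b_def by measurable
    have bGm: "(\<lambda>x. ennreal (b x / G x)) \<in> borel_measurable R" by measurable
    have bpos: "\<And>x. b x \<ge> \<delta>" by (simp add: b_def)
    have nn: "(\<integral>\<^sup>+x. ennreal (b x / G x) \<partial>P) \<le> ennreal (1 + \<delta>)"
    proof -
      have "(\<integral>\<^sup>+x. ennreal (b x / G x) \<partial>P) = (\<integral>\<^sup>+x. g x * ennreal (b x / G x) \<partial>R)"
        using nn_integral_density[OF gm bGm] Pd by simp
      also have "\<dots> \<le> (\<integral>\<^sup>+x. ennreal (G' (Phi x)) + ennreal \<delta> \<partial>R)"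
        using gG
      proof (intro nn_integral_mono_AE, eventually_elim)
        case (elim x)
        have "G x * (b x / G x) \<le> G' (Phi x) + \<delta>"
        proof (cases "G x = 0")
          case True thus ?thesis using G'nn[of "Phi x"] \<delta> by simp
        next
          case False thus ?thesis using G'nn[of "Phi x"] \<delta> by (simp add: b_def)
        qed
        hence le1: "ennreal (G x * (b x / G x)) \<le> ennreal (G' (Phi x) + \<delta>)" by (rule ennreal_leI)
        have nb: "0 \<le> b x / G x" using Gnn[of x] bpos[of x] \<delta> by simp
        have "g x * ennreal (b x / G x) = ennreal (G x) * ennreal (b x / G x)" using elim by simp
        also have "\<dots> = ennreal (G x * (b x / G x))" by (rule ennreal_mult[OF Gnn[of x] nb, symmetric])
        also have "\<dots> \<le> ennreal (G' (Phi x) + \<delta>)" by (rule le1)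
        also have "\<dots> = ennreal (G' (Phi x)) + ennreal \<delta>" using G'nn[of "Phi x"] \<delta> by simp
        finally show ?case .
      qed
      also have "\<dots> = (\<integral>\<^sup>+x. ennreal (G' (Phi x)) \<partial>R) + ennreal \<delta>"
        by (subst nn_integral_add) (auto simp: R.emeasure_space_1)
      also have "(\<integral>\<^sup>+x. ennreal (G' (Phi x)) \<partial>R) = 1"
        using intG' by (simp add: R'_def nn_integral_distr)
      finally show ?thesis using \<delta> by (simp add: ennreal_plus)
    qed
    have nbG: "\<And>x. 0 \<le> b x / G x" using Gnn bpos \<delta> by (meson divide_nonneg_nonneg less_le_trans less_imp_le)
    have int1: "integrable P (\<lambda>x. b x / G x)"
    proof (rule integrableI_nonneg)
      show "(\<lambda>x. b x / G x) \<in> borel_measurable P" by measurable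
      show "AE x in P. 0 \<le> b x / G x" using nbG by simp
      show "(\<integral>\<^sup>+x. ennreal (b x / G x) \<partial>P) < \<infinity>" using le_less_trans[OF nn ennreal_less_top] by simp
    qed
    have I1: "(\<integral>x. b x / G x \<partial>P) \<le> 1 + \<delta>"
    proof -
      have "(\<integral>x. b x / G x \<partial>P) = enn2real (\<integral>\<^sup>+x. ennreal (b x / G x) \<partial>P)"
        using nbG by (intro integral_eq_nn_integral) auto
      also have "\<dots> \<le> enn2real (ennreal (1 + \<delta>))" using nn by (intro enn2real_mono) auto
      also have "enn2real (ennreal (1 + \<delta>)) = 1 + \<delta>" using \<delta> by (intro enn2real_ennreal) simp
      finally show ?thesis .
    qed
    have pw: "AE x in P. ln (b x) \<le> ln (G x) + b x / G x - 1"
      using Gpos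
    proof eventually_elim
      case (elim x)
      have bp: "b x > 0" using bpos[of x] \<delta> by linarith
      have "ln (b x / G x) \<le> b x / G x - 1" using bp elim by (intro ln_le_minus_one) simp
      thus ?case using bp elim by (simp add: ln_div)
    qed
    have int2: "integrable P (\<lambda>x. ln (b x))"
    proof (rule Bochner_Integration.integrable_bound)
      show "integrable P (\<lambda>x. \<bar>ln \<delta>\<bar> + \<bar>ln (G x)\<bar> + b x / G x)"
        using int1 intl' by (intro Bochner_Integration.integrable_add integrable_abs) auto
      show "(\<lambda>x. ln (b x)) \<in> borel_measurable P" by measurable
      show "AE x in P. norm (ln (b x)) \<le> norm (\<bar>ln \<delta>\<bar> + \<bar>ln (G x)\<bar> + b x / G x)"
        using pw Gpos
      proof eventually_elim
        case (elim x)
        have bp: "b x > 0" using bpos[of x] \<delta> by linarith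
        have q: "b x / G x \<ge> 0" using bp elim by simp
        show ?case
        proof (cases "b x \<ge> 1")
          case True
          hence "ln (b x) \<ge> 0" by simp
          thus ?thesis using elim q by auto
        next
          case False
          hence "ln (b x) < 0" using bp by simp
          moreover have "ln \<delta> \<le> ln (b x)" using bpos[of x] \<delta> by simp
          ultimately show ?thesis using q by auto
        qed
      qed
    qed
    have "(\<integral>x. ln (b x) \<partial>P) \<le> (\<integral>x. ln (G x) + b x / G x - 1 \<partial>P)"
      using pw int1 int2 intl' by (intro integral_mono_AE) auto
    also have "\<dots> = (\<integral>x. ln (G x) \<partial>P) + (\<integral>x. b x / G x \<partial>P) - 1"
      using int1 intl' P.prob_space[unfolded spP] by simp
    finally have "(\<integral>x. ln (b x) \<partial>P) \<le> (\<integral>x. ln (G x) \<partial>P) + \<delta>" using I1 by linarith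
    moreover have "(\<integral>w. ln (max (G' w) \<delta>) \<partial>P') = (\<integral>x. ln (b x) \<partial>P)"
      unfolding P'_def b_def by (rule integral_distr) auto
    moreover have "integrable P' (\<lambda>w. ln (max (G' w) \<delta>))"
      unfolding P'_def using int2 unfolding b_def by (subst integrable_distr_eq) auto
    ultimately show ?thesis by simp
  qed
  have intG'P: "integrable P' (\<lambda>w. ln (G' w))"
  proof (rule Bochner_Integration.integrable_bound)
    have nn2: "(\<integral>\<^sup>+w. ennreal (1 / G' w) \<partial>P') \<le> 1"
    proof -
      have "(\<integral>\<^sup>+w. ennreal (1 / G' w) \<partial>P') = (\<integral>\<^sup>+w. g' w * ennreal (1 / G' w) \<partial>R')"
        using nn_integral_density[OF gmR', of "\<lambda>w. ennreal (1 / G' w)"] P'd by simp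
      also have "\<dots> \<le> (\<integral>\<^sup>+w. 1 \<partial>R')"
        using gG'
      proof (intro nn_integral_mono_AE, eventually_elim)
        case (elim x)
        have "G' x * (1 / G' x) \<le> 1" by (cases "G' x = 0") auto
        hence le1: "ennreal (G' x * (1 / G' x)) \<le> 1" by (simp add: ennreal_leI)
        have nb: "0 \<le> 1 / G' x" using G'nn[of x] by simp
        have "g' x * ennreal (1 / G' x) = ennreal (G' x) * ennreal (1 / G' x)" using elim by simp
        also have "\<dots> = ennreal (G' x * (1 / G' x))" by (rule ennreal_mult[OF G'nn[of x] nb, symmetric])
        also have "\<dots> \<le> 1" by (rule le1)
        finally show ?case .
      qed
      also have "\<dots> = 1" using R'.emeasure_space_1[unfolded spR'(1)] by simp
      finally show ?thesis .
    qed
    have "integrable P' (\<lambda>w. 1 / G' w)"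
    proof (rule integrableI_nonneg)
      show "(\<lambda>w. 1 / G' w) \<in> borel_measurable P'" by measurable
      show "AE x in P'. 0 \<le> 1 / G' x" using G'nn by simp
      show "(\<integral>\<^sup>+x. ennreal (1 / G' x) \<partial>P') < \<infinity>" using le_less_trans[OF nn2] by simp
    qed
    thus "integrable P' (\<lambda>w. \<bar>ln (max (G' w) 1)\<bar> + 1 / G' w)"
      using step[of 1] by (intro Bochner_Integration.integrable_add integrable_abs) auto
    show "(\<lambda>w. ln (G' w)) \<in> borel_measurable P'" by simp
    show "AE w in P'. norm (ln (G' w)) \<le> norm (\<bar>ln (max (G' w) 1)\<bar> + 1 / G' w)"
      using Gpos'
    proof eventually_elim
      case (elim w)
      show ?case
      proof (cases "G' w \<ge> 1")
        case True thus ?thesis using elim by auto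
      next
        case False
        have "ln (1 / G' w) \<le> 1 / G' w - 1" using elim by (intro ln_le_minus_one) simp
        hence "- ln (G' w) \<le> 1 / G' w" using elim by (simp add: ln_div)
        moreover have "ln (G' w) < 0" using False elim by simp
        ultimately show ?thesis using False elim by auto
      qed
    qed
  qed
  have fin: "(\<integral>w. ln (G' w) \<partial>P') \<le> (\<integral>x. ln (G x) \<partial>P)"
  proof (rule field_le_epsilon)
    fix \<delta> :: real assume \<delta>: "\<delta> > 0"
    have "(\<integral>w. ln (G' w) \<partial>P') \<le> (\<integral>w. ln (max (G' w) \<delta>) \<partial>P')"
      using Gpos' intG'P step[OF \<delta>] by (intro integral_mono_AE) auto
    thus "(\<integral>w. ln (G' w) \<partial>P') \<le> (\<integral>x. ln (G x) \<partial>P) + \<delta>" using step[OF \<delta>] by linarith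
  qed
  have "KL_div P' R' = ereal (\<integral>w. ln (G' w) \<partial>P')"
    using ac' intG'P by (simp add: KL_div_def G'_def g'_def)
  moreover have "KL_div P R = ereal (\<integral>x. ln (G x) \<partial>P)"
    using ac intl by (simp add: KL_div_def G_def g_def)
  ultimately show ?thesis using fin by (simp add: P'_def R'_def)
qed



lemma adj_inner:
  fixes U :: "real^'s^'d"
  shows "inner (U *v x) y = inner x (transpose U *v y)"
  by (metis dot_lmul_matrix vector_transpose_matrix)

lemma sq_decomp:
  fixes U :: "real^'s^'d"
  assumes UU: "transpose U ** U = mat 1"
  shows "(norm (U *v a - w))\<^sup>2 = (norm (a - transpose U *v w))\<^sup>2 + (norm ((mat 1 - U ** transpose U) *v w))\<^sup>2"
proof -
  define z where "z = transpose U *v w"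
  have iso: "inner (U *v x) (U *v y) = inner x y" for x y
  proof -
    have "inner (U *v x) (U *v y) = inner x (transpose U *v (U *v y))" by (rule adj_inner)
    also have "transpose U *v (U *v y) = y" by (metis UU matrix_vector_mul_assoc matrix_vector_mul_lid)
    finally show ?thesis .
  qed
  have P: "(mat 1 - U ** transpose U) *v w = w - U *v z"
    unfolding z_def by (metis matrix_vector_mul_assoc matrix_vector_mul_lid matrix_vector_mult_diff_rdistrib)
  have e1: "inner (U *v a) w = inner a z" unfolding z_def by (rule adj_inner)
  have e2: "inner (U *v z) w = inner z z" unfolding z_def by (rule adj_inner)
  have "(norm (U *v a - w))\<^sup>2 = inner (U *v a) (U *v a) - 2 * inner (U *v a) w + inner w w"
    by (simp add: power2_norm_eq_inner inner_diff_left inner_diff_right inner_commute)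
  also have "\<dots> = inner a a - 2 * inner a z + inner w w" by (simp add: iso e1)
  finally have A: "(norm (U *v a - w))\<^sup>2 = inner a a - 2 * inner a z + inner w w" .
  have B: "(norm (a - z))\<^sup>2 = inner a a - 2 * inner a z + inner z z"
    by (simp add: power2_norm_eq_inner inner_diff_left inner_diff_right inner_commute)
  have "(norm (w - U *v z))\<^sup>2 = inner w w - 2 * inner (U *v z) w + inner (U *v z) (U *v z)"
    by (simp add: power2_norm_eq_inner inner_diff_left inner_diff_right inner_commute)
  also have "\<dots> = inner w w - inner z z" by (simp add: iso e2)
  finally have C: "(norm (w - U *v z))\<^sup>2 = inner w w - inner z z" .
  show ?thesis unfolding P z_def[symmetric] A B C by simp
qed



lemma mvm_borel: "(\<lambda>x. (A::real^'n^'m) *v x) \<in> borel_measurable borel"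
  by (rule borel_measurable_continuous_onI[OF linear_continuous_on[OF matrix_vector_mul_bounded_linear]])

lemma mvm_meas[measurable]: "f \<in> borel_measurable M \<Longrightarrow> (\<lambda>x. (A::real^'n^'m) *v f x) \<in> borel_measurable M"
  using measurable_compose[OF _ mvm_borel] by blast

lemma sq_sum_le: "(a + b)\<^sup>2 \<le> 2 * a\<^sup>2 + 2 * (b::real)\<^sup>2"
  using power2_diff[of a b] power2_sum[of a b] zero_le_power2[of "a - b"] by linarith

lemma norm_diff_sq_le: "(norm (x - y))\<^sup>2 \<le> 2 * (norm x)\<^sup>2 + 2 * (norm (y::'a::real_normed_vector))\<^sup>2"
proof -
  have "norm (x - y) \<le> norm x + norm y" by (rule norm_triangle_ineq4)
  hence "(norm (x - y))\<^sup>2 \<le> (norm x + norm y)\<^sup>2" by (intro power_mono) auto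
  also have "\<dots> \<le> 2 * (norm x)\<^sup>2 + 2 * (norm y)\<^sup>2" by (rule sq_sum_le)
  finally show ?thesis .
qed

lemma norm_add_sq_le: "(norm (x + y))\<^sup>2 \<le> 2 * (norm x)\<^sup>2 + 2 * (norm (y::'a::real_normed_vector))\<^sup>2"
  using norm_diff_sq_le[of x "-y"] by simp

lemma coupling_sqdist_integrable:
  fixes Q :: "('a::euclidean_space \<times> 'a) measure"
  assumes Q: "Q \<in> couplings mu nu" and smu: "sets mu = sets borel" and snu: "sets nu = sets borel"
    and imu: "integrable mu (\<lambda>x. (norm x)\<^sup>2)" and inu: "integrable nu (\<lambda>x. (norm x)\<^sup>2)"
  shows "integrable Q (\<lambda>z. sqdist (fst z) (snd z))"
proof -
  from Q have sQ: "sets Q = sets (mu \<Otimes>\<^sub>M nu)" and dfst: "distr Q mu fst = mu" and dsnd: "distr Q nu snd = nu"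
    by (auto simp: couplings_def)
  have fm: "fst \<in> measurable Q mu" unfolding measurable_cong_sets[OF sQ refl] by (rule measurable_fst)
  have sm: "snd \<in> measurable Q nu" unfolding measurable_cong_sets[OF sQ refl] by (rule measurable_snd)
  have fb[measurable]: "fst \<in> borel_measurable Q" using fm unfolding measurable_cong_sets[OF refl smu] .
  have sb[measurable]: "snd \<in> borel_measurable Q" using sm unfolding measurable_cong_sets[OF refl snu] .
  have nmu: "(\<lambda>x::'a. (norm x)\<^sup>2) \<in> borel_measurable mu" unfolding measurable_cong_sets[OF smu refl] by measurable
  have nnu: "(\<lambda>x::'a. (norm x)\<^sup>2) \<in> borel_measurable nu" unfolding measurable_cong_sets[OF snu refl] by measurable
  have i1: "integrable Q (\<lambda>z. (norm (fst z))\<^sup>2)"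
    using imu integrable_distr_eq[OF fm nmu] dfst by simp
  have i2: "integrable Q (\<lambda>z. (norm (snd z))\<^sup>2)"
    using inu integrable_distr_eq[OF sm nnu] dsnd by simp
  show ?thesis
  proof (rule Bochner_Integration.integrable_bound)
    show "integrable Q (\<lambda>z. 2 * (norm (fst z))\<^sup>2 + 2 * (norm (snd z))\<^sup>2)"
      using i1 i2 by (intro Bochner_Integration.integrable_add integrable_mult_right)
    show "(\<lambda>z. sqdist (fst z) (snd z)) \<in> borel_measurable Q" unfolding sqdist_def by measurable
    show "AE z in Q. norm (sqdist (fst z) (snd z)) \<le> norm (2 * (norm (fst z))\<^sup>2 + 2 * (norm (snd z))\<^sup>2)"
      using norm_diff_sq_le by (intro AE_I2) (simp add: sqdist_def)
  qed
qed




declare transpose_matrix_vector[simp del]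

locale ots =
  fixes M :: "'w measure" and X :: "'w \<Rightarrow> real^'s" and Y :: "'w \<Rightarrow> real^'d"
    and U :: "real^'s^'d" and v :: "real^'d"
  assumes PM: "prob_space M" and UU: "transpose U ** U = mat 1"
    and Xm[measurable]: "X \<in> borel_measurable M" and Ym[measurable]: "Y \<in> borel_measurable M"
    and iX: "integrable M (\<lambda>\<omega>. (norm (X \<omega>))\<^sup>2)" and iY: "integrable M (\<lambda>\<omega>. (norm (Y \<omega>))\<^sup>2)"
begin

sublocale prob_space M by (rule PM)

abbreviation "mu \<equiv> distr M borel (\<lambda>\<omega>. U *v X \<omega> + v)"
abbreviation "nu \<equiv> distr M borel Y"
abbreviation "mu' \<equiv> distr M borel X"
abbreviation "nu' \<equiv> distr M borel (\<lambda>\<omega>. transpose U *v (Y \<omega> - v))"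
abbreviation "rho \<equiv> mu \<Otimes>\<^sub>M nu"
abbreviation "rho' \<equiv> mu' \<Otimes>\<^sub>M nu'"

definition "T = (\<lambda>x. transpose U *v (x - v))"
definition "h = (\<lambda>a. U *v a + v)"
definition "Phi = (\<lambda>z. (T (fst z), T (snd z)))"
definition "r = (\<lambda>y. (norm ((mat 1 - U ** transpose U) *v (y - v)))\<^sup>2)"

lemma T_app: "T x = transpose U *v (x - v)" by (simp add: T_def)
lemma r_app: "r y = (norm ((mat 1 - U ** transpose U) *v (y - v)))\<^sup>2" by (simp add: r_def)

lemma Tm[measurable]: "T \<in> borel_measurable borel" unfolding T_def by measurable
lemma hm[measurable]: "h \<in> borel_measurable borel" unfolding h_def by measurable
lemma rm[measurable]: "r \<in> borel_measurable borel" unfolding r_def by measurable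

lemma TU[simp]: "T (h a) = a"
  unfolding T_def h_def by (simp add: matrix_vector_mul_assoc UU del: transpose_matrix_vector)

lemma decomp: assumes "h (T x) = x" shows "sqdist x y = sqdist (T x) (T y) + r y"
proof -
  have 1: "x - y = U *v T x - (y - v)" using assms unfolding h_def by (metis add_diff_eq diff_diff_eq2)
  have "sqdist x y = (norm (U *v T x - (y - v)))\<^sup>2" unfolding sqdist_def 1 ..
  also have "\<dots> = (norm (T x - T y))\<^sup>2 + r y"
    using sq_decomp[OF UU, of "T x" "y - v"] unfolding T_app[symmetric] r_app[symmetric] .
  finally show ?thesis unfolding sqdist_def .
qed

lemma yv_decomp: "(norm (y - v))\<^sup>2 = (norm (T y))\<^sup>2 + r y"
  using sq_decomp[OF UU, of 0 "y - v"]
  unfolding matrix_vector_mult_0_right diff_0 norm_minus_cancel T_app[symmetric] r_app[symmetric] .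

lemma r_le: "r y \<le> (norm (y - v))\<^sup>2"
  using yv_decomp[of y] zero_le_power2[of "norm (T y)"] by linarith

lemma T_le: "(norm (T y))\<^sup>2 \<le> (norm (y - v))\<^sup>2"
  using yv_decomp[of y] r_app[of y] zero_le_power2[of "norm ((mat 1 - U ** transpose U) *v (y - v))"] by linarith

lemma normU: "norm (U *v a) = norm a"
proof -
  have "(norm (U *v a))\<^sup>2 = (norm a)\<^sup>2" using sq_decomp[OF UU, of a 0] by simp
  thus ?thesis by (simp add: power2_eq_iff_nonneg)
qed

lemma prob_mu: "prob_space mu" by (rule prob_space_distr) measurable
lemma prob_nu: "prob_space nu" by (rule prob_space_distr) measurable
lemma prob_mu': "prob_space mu'" by (rule prob_space_distr) measurable
lemma prob_nu': "prob_space nu'" by (rule prob_space_distr) measurable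

lemma mu_h: "(\<lambda>\<omega>. U *v X \<omega> + v) = (\<lambda>\<omega>. h (X \<omega>))" by (simp add: h_def)

lemma F1: "distr mu borel T = mu'"
  by (subst distr_distr) (auto simp: comp_def mu_h)

lemma F2: "distr nu borel T = nu'"
  by (subst distr_distr) (auto simp: comp_def T_def)

lemma AE_muT: "AE x in mu. h (T x) = x"
  by (subst AE_distr_iff) (auto simp: TU[unfolded h_def] h_def)

lemma mom_mu: "integrable mu (\<lambda>x. (norm x)\<^sup>2)"
proof -
  have "integrable M (\<lambda>\<omega>. (norm (U *v X \<omega> + v))\<^sup>2)"
  proof (rule Bochner_Integration.integrable_bound)
    show "integrable M (\<lambda>\<omega>. 2 * (norm (X \<omega>))\<^sup>2 + 2 * (norm v)\<^sup>2)"
      using iX by (intro Bochner_Integration.integrable_add integrable_mult_right) auto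
    show "(\<lambda>\<omega>. (norm (U *v X \<omega> + v))\<^sup>2) \<in> borel_measurable M" by measurable
    show "AE \<omega> in M. norm ((norm (U *v X \<omega> + v))\<^sup>2) \<le> norm (2 * (norm (X \<omega>))\<^sup>2 + 2 * (norm v)\<^sup>2)"
      using norm_add_sq_le[of "U *v X _" v] by (intro AE_I2) (simp add: normU)
  qed
  thus ?thesis by (subst integrable_distr_eq) auto
qed

lemma mom_nu: "integrable nu (\<lambda>x. (norm x)\<^sup>2)"
  using iY by (subst integrable_distr_eq) auto

lemma mom_mu': "integrable mu' (\<lambda>x. (norm x)\<^sup>2)"
  using iX by (subst integrable_distr_eq) auto

lemma bound_yv: "integrable M (\<lambda>\<omega>. 2 * (norm (Y \<omega>))\<^sup>2 + 2 * (norm v)\<^sup>2)"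
  using iY by (intro Bochner_Integration.integrable_add integrable_mult_right) auto

lemma mom_nu': "integrable nu' (\<lambda>x. (norm x)\<^sup>2)"
proof -
  have "integrable M (\<lambda>\<omega>. (norm (T (Y \<omega>)))\<^sup>2)"
  proof (rule Bochner_Integration.integrable_bound[OF bound_yv])
    show "(\<lambda>\<omega>. (norm (T (Y \<omega>)))\<^sup>2) \<in> borel_measurable M" by measurable
    show "AE \<omega> in M. norm ((norm (T (Y \<omega>)))\<^sup>2) \<le> norm (2 * (norm (Y \<omega>))\<^sup>2 + 2 * (norm v)\<^sup>2)"
    proof (intro AE_I2)
      fix \<omega> have "(norm (T (Y \<omega>)))\<^sup>2 \<le> 2 * (norm (Y \<omega>))\<^sup>2 + 2 * (norm v)\<^sup>2"
        using order_trans[OF T_le norm_diff_sq_le] .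
      thus "norm ((norm (T (Y \<omega>)))\<^sup>2) \<le> norm (2 * (norm (Y \<omega>))\<^sup>2 + 2 * (norm v)\<^sup>2)" by simp
    qed
  qed
  thus ?thesis by (subst integrable_distr_eq) (auto simp: T_def)
qed

lemma int_r: "integrable nu r"
proof -
  have "integrable M (\<lambda>\<omega>. r (Y \<omega>))"
  proof (rule Bochner_Integration.integrable_bound[OF bound_yv])
    show "(\<lambda>\<omega>. r (Y \<omega>)) \<in> borel_measurable M" by measurable
    show "AE \<omega> in M. norm (r (Y \<omega>)) \<le> norm (2 * (norm (Y \<omega>))\<^sup>2 + 2 * (norm v)\<^sup>2)"
    proof (intro AE_I2)
      fix \<omega> have "r (Y \<omega>) \<le> 2 * (norm (Y \<omega>))\<^sup>2 + 2 * (norm v)\<^sup>2"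
        using order_trans[OF r_le norm_diff_sq_le] .
      moreover have "r (Y \<omega>) \<ge> 0" by (simp add: r_app)
      ultimately show "norm (r (Y \<omega>)) \<le> norm (2 * (norm (Y \<omega>))\<^sup>2 + 2 * (norm v)\<^sup>2)" by simp
    qed
  qed
  thus ?thesis by (subst integrable_distr_eq) auto
qed

lemma sets_rho: "sets rho = sets (borel \<Otimes>\<^sub>M borel)" by (rule sets_pair_measure_cong) auto
lemma sets_rho': "sets rho' = sets (borel \<Otimes>\<^sub>M borel)" by (rule sets_pair_measure_cong) auto

lemma Phi_bb: "Phi \<in> measurable (borel \<Otimes>\<^sub>M borel) (borel \<Otimes>\<^sub>M borel)" unfolding Phi_def by measurable

lemma Phi_meas: "Phi \<in> measurable rho rho'"
  unfolding measurable_cong_sets[OF sets_rho sets_rho'] by (rule Phi_bb)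

lemma rho'_eq: "distr rho rho' Phi = rho'"
proof -
  have "distr mu borel T \<Otimes>\<^sub>M distr nu borel T = distr rho (borel \<Otimes>\<^sub>M borel) (\<lambda>(x, y). (T x, T y))"
    by (rule pair_measure_distr) (auto intro: prob_space_imp_sigma_finite prob_nu' simp: F2)
  hence "rho' = distr rho (borel \<Otimes>\<^sub>M borel) (\<lambda>(x, y). (T x, T y))" by (simp add: F1 F2)
  also have "\<dots> = distr rho rho' Phi"
    by (rule distr_cong) (auto simp: sets_rho' Phi_def)
  finally show ?thesis ..
qed

end




context ots begin

lemma meas_mu_mu': "measurable mu mu' = measurable borel borel" by (rule measurable_cong_sets) simp_all
lemma meas_nu_nu': "measurable nu nu' = measurable borel borel" by (rule measurable_cong_sets) simp_all
lemma meas_mu'_mu: "measurable mu' mu = measurable borel borel" by (rule measurable_cong_sets) simp_all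

lemma coupling_facts:
  assumes Q: "Q \<in> couplings mu nu"
  shows "sets Q = sets rho" "prob_space Q" "distr Q mu fst = mu" "distr Q nu snd = nu"
    "Phi \<in> measurable Q rho'" "fst \<in> measurable Q mu" "snd \<in> measurable Q nu"
proof -
  from Q show sQ: "sets Q = sets rho" and "prob_space Q" "distr Q mu fst = mu" "distr Q nu snd = nu"
    by (auto simp: couplings_def)
  show "Phi \<in> measurable Q rho'" unfolding measurable_cong_sets[OF sQ refl] by (rule Phi_meas)
  show "fst \<in> measurable Q mu" unfolding measurable_cong_sets[OF sQ refl] by (rule measurable_fst)
  show "snd \<in> measurable Q nu" unfolding measurable_cong_sets[OF sQ refl] by (rule measurable_snd)
qed

lemma coupling_push: assumes Q: "Q \<in> couplings mu nu" shows "distr Q rho' Phi \<in> couplings mu' nu'"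
proof -
  note cf = coupling_facts[OF Q]
  have Tmu: "T \<in> measurable mu mu'" unfolding meas_mu_mu' by (rule Tm)
  have Tnu: "T \<in> measurable nu nu'" unfolding meas_nu_nu' by (rule Tm)
  have "distr (distr Q rho' Phi) mu' fst = distr Q mu' (fst \<circ> Phi)"
    by (rule distr_distr[OF measurable_fst cf(5)])
  also have "fst \<circ> Phi = T \<circ> fst" by (auto simp: Phi_def)
  also have "distr Q mu' (T \<circ> fst) = distr (distr Q mu fst) mu' T"
    by (rule distr_distr[OF Tmu cf(6), symmetric])
  also have "\<dots> = distr mu mu' T" using cf by simp
  also have "\<dots> = distr mu borel T" by (rule distr_cong) auto
  also have "\<dots> = mu'" by (rule F1)
  finally have 1: "distr (distr Q rho' Phi) mu' fst = mu'" .
  have "distr (distr Q rho' Phi) nu' snd = distr Q nu' (snd \<circ> Phi)"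
    by (rule distr_distr[OF measurable_snd cf(5)])
  also have "snd \<circ> Phi = T \<circ> snd" by (auto simp: Phi_def)
  also have "distr Q nu' (T \<circ> snd) = distr (distr Q nu snd) nu' T"
    by (rule distr_distr[OF Tnu cf(7), symmetric])
  also have "\<dots> = distr nu nu' T" using cf by simp
  also have "\<dots> = distr nu borel T" by (rule distr_cong) auto
  also have "\<dots> = nu'" by (rule F2)
  finally have 2: "distr (distr Q rho' Phi) nu' snd = nu'" .
  have 3: "prob_space (distr Q rho' Phi)" by (rule prob_space.prob_space_distr) (auto intro: cf)
  show ?thesis unfolding couplings_def using 1 2 3 by simp
qed

lemma sqm_rho': "(\<lambda>z. sqdist (fst z) (snd z)) \<in> borel_measurable rho'"
  unfolding measurable_cong_sets[OF sets_rho' refl] sqdist_def by measurable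

lemma cost_decomp: assumes Q: "Q \<in> couplings mu nu"
  shows "cost_integral Q sqdist = cost_integral (distr Q rho' Phi) sqdist + ereal (integral\<^sup>L nu r)"
proof -
  note cf = coupling_facts[OF Q]
  have Q': "distr Q rho' Phi \<in> couplings mu' nu'" by (rule coupling_push[OF Q])
  have iQ: "integrable Q (\<lambda>z. sqdist (fst z) (snd z))"
    by (rule coupling_sqdist_integrable[OF Q]) (simp_all add: mom_mu mom_nu)
  have iQ': "integrable (distr Q rho' Phi) (\<lambda>z. sqdist (fst z) (snd z))"
    by (rule coupling_sqdist_integrable[OF Q']) (simp_all add: mom_mu' mom_nu')
  have iQ'': "integrable Q (\<lambda>z. sqdist (T (fst z)) (T (snd z)))"
    using iQ' integrable_distr_eq[OF cf(5) sqm_rho'] by (simp add: Phi_def)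
  have rm': "r \<in> borel_measurable nu" using rm by simp
  have ir: "integrable Q (\<lambda>z. r (snd z))" using int_r integrable_distr_eq[OF cf(7) rm'] cf(4) by simp
  have AEQ: "AE z in Q. h (T (fst z)) = fst z"
  proof -
    have "AE x in distr Q mu fst. h (T x) = x" unfolding cf(3) by (rule AE_muT)
    from AE_distrD[OF cf(6) this] show ?thesis .
  qed
  have "(\<integral>z. sqdist (fst z) (snd z) \<partial>Q) = (\<integral>z. sqdist (T (fst z)) (T (snd z)) + r (snd z) \<partial>Q)"
  proof (rule integral_cong_AE)
    show "(\<lambda>z. sqdist (fst z) (snd z)) \<in> borel_measurable Q" using iQ by (rule borel_measurable_integrable)
    show "(\<lambda>z. sqdist (T (fst z)) (T (snd z)) + r (snd z)) \<in> borel_measurable Q"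
      using iQ'' ir by (intro borel_measurable_integrable Bochner_Integration.integrable_add)
    show "AE z in Q. sqdist (fst z) (snd z) = sqdist (T (fst z)) (T (snd z)) + r (snd z)"
      using AEQ by eventually_elim (rule decomp)
  qed
  also have "\<dots> = (\<integral>z. sqdist (T (fst z)) (T (snd z)) \<partial>Q) + (\<integral>z. r (snd z) \<partial>Q)"
    using iQ'' ir by (rule Bochner_Integration.integral_add)
  also have "(\<integral>z. sqdist (T (fst z)) (T (snd z)) \<partial>Q) = (\<integral>z. sqdist (fst z) (snd z) \<partial>(distr Q rho' Phi))"
    using integral_distr[OF cf(5) sqm_rho'] by (simp add: Phi_def)
  also have "(\<integral>z. r (snd z) \<partial>Q) = integral\<^sup>L nu r"
    using integral_distr[OF cf(7) rm'] cf(4) by simp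
  finally show ?thesis using iQ iQ' by (simp add: cost_integral_def)
qed

end




context ots begin

lemma pr_rho: "pair_prob_space mu nu"
  by (simp add: pair_prob_space_def pair_sigma_finite_def prob_space_imp_sigma_finite prob_mu prob_nu)
lemma pr_rho': "pair_prob_space mu' nu'"
  by (simp add: pair_prob_space_def pair_sigma_finite_def prob_space_imp_sigma_finite prob_mu' prob_nu')

lemma meas_rho: "measurable rho N = measurable (borel \<Otimes>\<^sub>M borel) N" by (rule measurable_cong_sets[OF sets_rho refl])
lemma meas_rho': "measurable rho' N = measurable (borel \<Otimes>\<^sub>M borel) N" by (rule measurable_cong_sets[OF sets_rho' refl])

lemma lift_marg2:
  assumes Q': "Q' \<in> couplings mu' nu'" and ac: "absolutely_continuous rho' Q'"
  shows "distr (density rho (\<lambda>z. RN_deriv rho' Q' (Phi z))) nu snd = nu"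
proof -
  interpret R: pair_prob_space mu nu by (rule pr_rho)
  interpret R': pair_prob_space mu' nu' by (rule pr_rho')
  from Q' have sQ': "sets Q' = sets rho'" and pQ': "prob_space Q'" and d2': "distr Q' nu' snd = nu'"
    by (auto simp: couplings_def)
  define g' where "g' = RN_deriv rho' Q'"
  have g'm[measurable]: "g' \<in> borel_measurable (borel \<Otimes>\<^sub>M borel)"
    unfolding g'_def meas_rho'[symmetric] by simp
  have Q'd: "density rho' g' = Q'" using R'.density_RN_deriv[OF ac sQ'] by (simp add: g'_def)
  define Q where "Q = density rho (\<lambda>z. g' (Phi z))"
  define H where "H = (\<lambda>z. \<integral>\<^sup>+x. g' (x, z) \<partial>mu')"
  have Hm: "H \<in> borel_measurable nu'"
  proof -
    have "(\<lambda>(z, x). g' (x, z)) \<in> borel_measurable (nu' \<Otimes>\<^sub>M mu')"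
      unfolding measurable_cong_sets[OF sets_pair_measure_cong[of nu' borel mu' borel] refl] by (simp_all) measurable
    from R'.M1.borel_measurable_nn_integral_fst[OF this] show ?thesis by (simp add: H_def)
  qed
  have "density nu' H = density nu' (\<lambda>_. 1)"
  proof (rule measure_eqI)
    fix C assume "C \<in> sets (density nu' H)"
    hence C[measurable]: "C \<in> sets borel" by simp
    have "emeasure (density nu' H) C = (\<integral>\<^sup>+z. H z * indicator C z \<partial>nu')"
      by (rule emeasure_density[OF Hm]) simp
    also have "\<dots> = (\<integral>\<^sup>+z. (\<integral>\<^sup>+x. g' (x, z) * indicator C z \<partial>mu') \<partial>nu')"
      unfolding H_def by (intro nn_integral_cong nn_integral_multc[symmetric]) (simp add: measurable_cong_sets[of mu' borel])
    also have "\<dots> = (\<integral>\<^sup>+w. g' w * indicator (snd -` C \<inter> space rho') w \<partial>rho')"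
    proof -
      have "(\<lambda>w. g' w * indicator C (snd w)) \<in> borel_measurable rho'" unfolding meas_rho' by measurable
      from R'.nn_integral_snd[OF this] have "(\<integral>\<^sup>+z. (\<integral>\<^sup>+x. g' (x, z) * indicator C z \<partial>mu') \<partial>nu') = (\<integral>\<^sup>+w. g' w * indicator C (snd w) \<partial>rho')" by simp
      also have "\<dots> = (\<integral>\<^sup>+w. g' w * indicator (snd -` C \<inter> space rho') w \<partial>rho')"
        by (intro nn_integral_cong) (auto simp: indicator_def)
      finally show ?thesis .
    qed
    also have "\<dots> = emeasure (density rho' g') (snd -` C \<inter> space rho')"
    proof -
      have Cs: "snd -` C \<inter> space rho' \<in> sets rho'" by (rule measurable_sets[OF measurable_snd]) simp
      have gm: "g' \<in> borel_measurable rho'" unfolding meas_rho' by (rule g'm)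
      show ?thesis by (rule emeasure_density[OF gm Cs, symmetric])
    qed
    also have "\<dots> = emeasure (distr Q' nu' snd) C"
      using Q'd sQ' by (simp add: emeasure_distr sets_eq_imp_space_eq[OF sQ'] measurable_cong_sets[OF sQ' refl])
    also have "\<dots> = emeasure (density nu' (\<lambda>_. 1)) C" using d2' by (simp add: density_1)
    finally show "emeasure (density nu' H) C = emeasure (density nu' (\<lambda>_. 1)) C" .
  qed simp
  hence AEH: "AE z in nu'. H z = 1"
    using R'.M2.density_unique_iff[OF Hm, of "\<lambda>_. 1"] by simp
  have AEHT: "AE y in nu. H (T y) = 1"
  proof -
    have "AE z in distr nu borel T. H z = 1" unfolding F2 by (rule AEH)
    from AE_distrD[OF _ this] show ?thesis using Tm by (simp add: measurable_cong_sets[of nu borel])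
  qed
  have "distr Q nu snd = nu"
  proof (rule measure_eqI)
    fix B assume "B \<in> sets (distr Q nu snd)"
    hence B[measurable]: "B \<in> sets borel" by simp
    have sndQ: "snd \<in> measurable Q nu" unfolding Q_def measurable_cong_sets[OF sets_density refl] by (rule measurable_snd)
    have "emeasure (distr Q nu snd) B = emeasure Q (snd -` B \<inter> space Q)"
      by (rule emeasure_distr[OF sndQ]) simp
    also have "\<dots> = (\<integral>\<^sup>+z. g' (Phi z) * indicator (snd -` B \<inter> space rho) z \<partial>rho)"
    proof -
      have gPm: "(\<lambda>z. g' (Phi z)) \<in> borel_measurable rho" unfolding meas_rho Phi_def by measurable
      have Bs: "snd -` B \<inter> space rho \<in> sets rho" by (rule measurable_sets[OF measurable_snd]) simp
      show ?thesis unfolding Q_def space_density by (rule emeasure_density[OF gPm Bs])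
    qed
    also have "\<dots> = (\<integral>\<^sup>+z. g' (T (fst z), T (snd z)) * indicator B (snd z) \<partial>rho)"
      by (intro nn_integral_cong) (auto simp: indicator_def Phi_def)
    also have "\<dots> = (\<integral>\<^sup>+y. (\<integral>\<^sup>+x. g' (T x, T y) * indicator B y \<partial>mu) \<partial>nu)"
    proof -
      have fm: "(\<lambda>z. g' (T (fst z), T (snd z)) * indicator B (snd z)) \<in> borel_measurable rho"
        unfolding meas_rho by measurable
      from R.nn_integral_snd[OF fm] show ?thesis by simp
    qed
    also have "\<dots> = (\<integral>\<^sup>+y. H (T y) * indicator B y \<partial>nu)"
    proof (intro nn_integral_cong)
      fix y
      have "(\<integral>\<^sup>+x. g' (T x, T y) * indicator B y \<partial>mu) = (\<integral>\<^sup>+x. g' (T x, T y) \<partial>mu) * indicator B y"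
        by (rule nn_integral_multc) (simp add: measurable_cong_sets[of mu borel], measurable)
      also have "(\<integral>\<^sup>+x. g' (T x, T y) \<partial>mu) = (\<integral>\<^sup>+x. g' (x, T y) \<partial>(distr mu borel T))"
        by (rule nn_integral_distr[symmetric]) (simp_all add: measurable_cong_sets[of mu borel], measurable)
      also have "\<dots> = H (T y)" by (simp add: F1 H_def)
      finally show "(\<integral>\<^sup>+x. g' (T x, T y) * indicator B y \<partial>mu) = H (T y) * indicator B y" .
    qed
    also have "\<dots> = (\<integral>\<^sup>+y. indicator B y \<partial>nu)"
      using AEHT by (intro nn_integral_cong_AE) auto
    also have "\<dots> = emeasure nu B" by simp
    finally show "emeasure (distr Q nu snd) B = emeasure nu B" .
  qed simp
  thus ?thesis by (simp add: Q_def g'_def)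
qed

end




context ots begin

lemma lift:
  assumes Q': "Q' \<in> couplings mu' nu'" and ac: "absolutely_continuous rho' Q'"
  shows "\<exists>Q \<in> couplings mu nu. distr Q rho' Phi = Q' \<and> KL_div Q rho = KL_div Q' rho'"
proof -
  interpret R: pair_prob_space mu nu by (rule pr_rho)
  interpret R': pair_prob_space mu' nu' by (rule pr_rho')
  from Q' have sQ': "sets Q' = sets rho'" and pQ': "prob_space Q'" and d1': "distr Q' mu' fst = mu'"
    by (auto simp: couplings_def)
  define g' where "g' = RN_deriv rho' Q'"
  have g'm[measurable]: "g' \<in> borel_measurable (borel \<Otimes>\<^sub>M borel)"
    unfolding g'_def meas_rho'[symmetric] by simp
  have g'm': "g' \<in> borel_measurable rho'" unfolding meas_rho' by (rule g'm)
  have Q'd: "density rho' g' = Q'" using R'.density_RN_deriv[OF ac sQ'] by (simp add: g'_def)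
  define Q where "Q = density rho (\<lambda>z. g' (Phi z))"
  have gPm: "(\<lambda>z. g' (Phi z)) \<in> borel_measurable rho" unfolding meas_rho Phi_def by measurable
  have sQ: "sets Q = sets rho" by (simp add: Q_def)
  have spQ: "space Q = space rho" by (simp add: Q_def)
  have mQ: "measurable Q N = measurable (borel \<Otimes>\<^sub>M borel) N" for N
    unfolding Q_def measurable_cong_sets[OF sets_density refl] by (rule meas_rho)
  have PhiQ: "Phi \<in> measurable Q rho'" unfolding mQ meas_rho'[symmetric] measurable_cong_sets[OF refl sets_rho'] by (rule Phi_bb)
  have dQ: "distr Q rho' Phi = Q'"
  proof -
    have "distr Q rho' Phi = density (distr rho rho' Phi) g'"
      unfolding Q_def by (rule density_distr[OF g'm' Phi_meas, symmetric])
    also have "\<dots> = Q'" by (simp add: rho'_eq Q'd)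
    finally show ?thesis .
  qed
  have pQ: "prob_space Q"
  proof (rule prob_spaceI)
    have pre: "Phi -` space rho' \<inter> space Q = space Q" using measurable_space[OF PhiQ] by auto
    have "emeasure (distr Q rho' Phi) (space rho') = emeasure Q (Phi -` space rho' \<inter> space Q)"
      by (rule emeasure_distr[OF PhiQ sets.top])
    hence "emeasure Q (space Q) = emeasure (distr Q rho' Phi) (space rho')" unfolding pre ..
    also have "\<dots> = emeasure Q' (space Q')" using dQ sets_eq_imp_space_eq[OF sQ'] by simp
    also have "\<dots> = 1" using pQ' by (simp add: prob_space.emeasure_space_1)
    finally show "emeasure Q (space Q) = 1" .
  qed
  have AE_rho: "AE z in rho. h (T (fst z)) = fst z"
  proof -
    have "AE x in distr rho mu fst. h (T x) = x" unfolding R.M2.distr_pair_fst by (rule AE_muT)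
    from AE_distrD[OF measurable_fst this] show ?thesis .
  qed
  have AEQ: "AE z in Q. fst z = h (fst (Phi z))"
    unfolding Q_def AE_density[OF gPm] using AE_rho by eventually_elim (auto simp: Phi_def)
  have m1: "distr Q mu fst = mu"
  proof -
    have hfm: "h \<circ> fst \<in> measurable rho' mu"
      unfolding meas_rho' by (simp add: measurable_cong_sets[of mu borel], measurable)
    have fQ: "fst \<in> measurable Q mu" unfolding mQ by (simp add: measurable_cong_sets[of mu borel], measurable)
    have "distr Q mu fst = distr Q mu (\<lambda>z. (h \<circ> fst) (Phi z))"
      by (rule distr_cong_AE) (use AEQ fQ measurable_comp[OF PhiQ hfm] in \<open>auto simp: comp_def\<close>)
    also have "\<dots> = distr (distr Q rho' Phi) mu (h \<circ> fst)"
      using distr_distr[OF hfm PhiQ] by (simp add: comp_def)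
    also have "\<dots> = distr (distr Q' mu' fst) mu h"
      unfolding dQ by (rule distr_distr[symmetric]) (simp_all add: measurable_cong_sets[OF sQ' refl] meas_mu'_mu)
    also have "\<dots> = distr M mu (h \<circ> X)"
      unfolding d1' by (rule distr_distr) (simp_all add: meas_mu'_mu)
    also have "\<dots> = mu" by (rule distr_cong) (auto simp: h_def)
    finally show ?thesis .
  qed
  have m2: "distr Q nu snd = nu" unfolding Q_def g'_def by (rule lift_marg2[OF Q' ac])
  have QC: "Q \<in> couplings mu nu" unfolding couplings_def using sQ pQ m1 m2 by simp
  have acQ: "absolutely_continuous rho Q" unfolding Q_def by (rule absolutely_continuousI_density[OF gPm])
  have RN: "AE z in rho. g' (Phi z) = RN_deriv rho Q z"
    by (rule R.RN_deriv_unique[OF gPm]) (simp add: Q_def)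
  have RNQ: "AE z in Q. ln (enn2real (RN_deriv rho Q z)) = ln (enn2real (g' (Phi z)))"
    using absolutely_continuous_AE[OF sQ acQ RN] by eventually_elim simp
  have lnm: "(\<lambda>w. ln (enn2real (g' w))) \<in> borel_measurable rho'" using g'm' by measurable
  have m_a: "(\<lambda>z. ln (enn2real (RN_deriv rho Q z))) \<in> borel_measurable Q"
    unfolding measurable_cong_sets[OF sQ refl] by measurable
  have m_b: "(\<lambda>z. ln (enn2real (g' (Phi z)))) \<in> borel_measurable Q"
    using measurable_comp[OF PhiQ lnm] by (simp add: comp_def)
  have int_eq: "integrable Q (\<lambda>z. ln (enn2real (RN_deriv rho Q z))) \<longleftrightarrow> integrable Q' (\<lambda>w. ln (enn2real (RN_deriv rho' Q' w)))"
  proof -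
    have "integrable Q (\<lambda>z. ln (enn2real (RN_deriv rho Q z))) \<longleftrightarrow> integrable Q (\<lambda>z. ln (enn2real (g' (Phi z))))"
      by (rule integrable_cong_AE[OF m_a m_b RNQ])
    also have "\<dots> \<longleftrightarrow> integrable (distr Q rho' Phi) (\<lambda>w. ln (enn2real (g' w)))"
      by (rule integrable_distr_eq[OF PhiQ lnm, symmetric])
    finally show ?thesis unfolding dQ g'_def .
  qed
  have integ_eq: "(\<integral>z. ln (enn2real (RN_deriv rho Q z)) \<partial>Q) = (\<integral>w. ln (enn2real (RN_deriv rho' Q' w)) \<partial>Q')"
  proof -
    have "(\<integral>z. ln (enn2real (RN_deriv rho Q z)) \<partial>Q) = (\<integral>z. ln (enn2real (g' (Phi z))) \<partial>Q)"
      by (rule integral_cong_AE[OF m_a m_b RNQ])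
    also have "\<dots> = (\<integral>w. ln (enn2real (g' w)) \<partial>(distr Q rho' Phi))"
      by (rule integral_distr[OF PhiQ lnm, symmetric])
    finally show ?thesis unfolding dQ g'_def .
  qed
  have "KL_div Q rho = KL_div Q' rho'"
    unfolding KL_div_def using acQ ac int_eq integ_eq by simp
  thus ?thesis using QC dQ by blast
qed

end




theorem mainTheorem5:
  fixes M :: "'w measure"
    and X :: "'w \<Rightarrow> real^'s" and Y :: "'w \<Rightarrow> real^'d"
    and U :: "real^'s^'d" and v :: "real^'d" and \<epsilon> :: real
  assumes "prob_space M"
    and "\<epsilon> > 0"
    and "CARD('s) \<le> CARD('d)"
    and "transpose U ** U = mat 1"
    and "X \<in> borel_measurable M" and "Y \<in> borel_measurable M"
    and "integrable M (\<lambda>\<omega>. (norm (X \<omega>))\<^sup>2)"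
    and "integrable M (\<lambda>\<omega>. (norm (Y \<omega>))\<^sup>2)"
  shows "OT_ent sqdist \<epsilon> (distr M borel (\<lambda>\<omega>. U *v X \<omega> + v)) (distr M borel Y)
       = OT_ent sqdist \<epsilon> (distr M borel X) (distr M borel (\<lambda>\<omega>. transpose U *v (Y \<omega> - v)))
         + ereal (\<integral>\<omega>. (norm ((mat 1 - U ** transpose U) *v (Y \<omega> - v)))\<^sup>2 \<partial>M)"
proof -
  interpret O: ots M X Y U v
    by (rule ots.intro[OF assms(1) assms(4-8)])
  have eps: "\<epsilon> > 0" by fact
  have Eterm: "(\<integral>\<omega>. (norm ((mat 1 - U ** transpose U) *v (Y \<omega> - v)))\<^sup>2 \<partial>M) = integral\<^sup>L O.nu O.r"
  proof -
    have "integral\<^sup>L O.nu O.r = (\<integral>\<omega>. O.r (Y \<omega>) \<partial>M)" by (rule integral_distr[OF assms(6) O.rm])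
    also have "\<dots> = (\<integral>\<omega>. (norm ((mat 1 - U ** transpose U) *v (Y \<omega> - v)))\<^sup>2 \<partial>M)" by (simp only: O.r_app)
    finally show ?thesis ..
  qed
  define c where "c = integral\<^sup>L O.nu O.r"
  define obj where "obj = (\<lambda>Q. cost_integral Q sqdist + ereal \<epsilon> * KL_div Q O.rho)"
  define obj' where "obj' = (\<lambda>Q. cost_integral Q sqdist + ereal \<epsilon> * KL_div Q O.rho')"
  have LHS: "OT_ent sqdist \<epsilon> O.mu O.nu = (INF Q \<in> couplings O.mu O.nu. obj Q)"
    by (simp add: OT_ent_def obj_def)
  have RHS: "OT_ent sqdist \<epsilon> O.mu' O.nu' = (INF Q \<in> couplings O.mu' O.nu'. obj' Q)"
    by (simp add: OT_ent_def obj'_def)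
  have cost_fin: "\<exists>a. cost_integral Q sqdist = ereal a" if "Q \<in> couplings O.mu' O.nu'" for Q
  proof -
    have "integrable Q (\<lambda>z. sqdist (fst z) (snd z))"
      by (rule coupling_sqdist_integrable[OF that]) (simp_all add: O.mom_mu' O.mom_nu')
    thus ?thesis by (simp add: cost_integral_def)
  qed
  have prho: "prob_space O.rho" by (rule prob_space_pair[OF O.prob_mu O.prob_nu])
  have ge: "OT_ent sqdist \<epsilon> O.mu' O.nu' + ereal c \<le> OT_ent sqdist \<epsilon> O.mu O.nu"
    unfolding LHS
  proof (rule INF_greatest)
    fix Q assume Q: "Q \<in> couplings O.mu O.nu"
    define Q' where "Q' = distr Q O.rho' O.Phi"
    have Q'C: "Q' \<in> couplings O.mu' O.nu'" unfolding Q'_def by (rule O.coupling_push[OF Q])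
    have cd: "cost_integral Q sqdist = cost_integral Q' sqdist + ereal c"
      unfolding Q'_def c_def by (rule O.cost_decomp[OF Q])
    have kl: "KL_div Q' O.rho' \<le> KL_div Q O.rho"
      using KL_distr_le[OF prho O.coupling_facts(2)[OF Q] O.coupling_facts(1)[OF Q] O.Phi_meas]
      unfolding O.rho'_eq Q'_def .
    have "OT_ent sqdist \<epsilon> O.mu' O.nu' \<le> obj' Q'" unfolding RHS by (rule INF_lower[OF Q'C])
    hence "OT_ent sqdist \<epsilon> O.mu' O.nu' + ereal c \<le> obj' Q' + ereal c" by (rule add_right_mono)
    also have "\<dots> = cost_integral Q' sqdist + ereal \<epsilon> * KL_div Q' O.rho' + ereal c" by (simp add: obj'_def)
    also have "\<dots> \<le> cost_integral Q' sqdist + ereal \<epsilon> * KL_div Q O.rho + ereal c"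
      using kl eps by (intro add_right_mono add_left_mono ereal_mult_left_mono) auto
    also have "\<dots> = obj Q" by (simp add: obj_def cd ac_simps)
    finally show "OT_ent sqdist \<epsilon> O.mu' O.nu' + ereal c \<le> obj Q" .
  qed
  have "OT_ent sqdist \<epsilon> O.mu O.nu - ereal c \<le> OT_ent sqdist \<epsilon> O.mu' O.nu'"
    unfolding RHS
  proof (rule INF_greatest)
    fix Q' assume Q'C: "Q' \<in> couplings O.mu' O.nu'"
    obtain a where a: "cost_integral Q' sqdist = ereal a" using cost_fin[OF Q'C] by blast
    show "OT_ent sqdist \<epsilon> O.mu O.nu - ereal c \<le> obj' Q'"
    proof (cases "absolutely_continuous O.rho' Q'")
      case False
      hence "KL_div Q' O.rho' = \<infinity>" by (simp add: KL_div_def)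
      hence "obj' Q' = \<infinity>" using a eps by (simp add: obj'_def)
      thus ?thesis by simp
    next
      case True
      from O.lift[OF Q'C True] obtain Q where Q: "Q \<in> couplings O.mu O.nu"
        and dQ: "distr Q O.rho' O.Phi = Q'" and klQ: "KL_div Q O.rho = KL_div Q' O.rho'" by blast
      have "OT_ent sqdist \<epsilon> O.mu O.nu \<le> obj Q" unfolding LHS by (rule INF_lower[OF Q])
      also have "obj Q = obj' Q' + ereal c"
      proof -
        have cd: "cost_integral Q sqdist = cost_integral Q' sqdist + ereal c"
          using O.cost_decomp[OF Q] unfolding dQ c_def[symmetric] .
        have "obj Q = (cost_integral Q' sqdist + ereal c) + ereal \<epsilon> * KL_div Q' O.rho'"
          unfolding obj_def cd klQ ..
        also have "\<dots> = obj' Q' + ereal c" unfolding obj'_def by (simp only: ac_simps)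
        finally show ?thesis .
      qed
      finally show ?thesis by (simp add: ereal_minus_le_iff)
    qed
  qed
  hence le: "OT_ent sqdist \<epsilon> O.mu O.nu \<le> OT_ent sqdist \<epsilon> O.mu' O.nu' + ereal c"
    by (simp add: ereal_minus_le_iff)
  show ?thesis using ge le unfolding Eterm c_def[symmetric] by (rule antisym[rotated])
qed


end
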